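(* Suppose Assumptions (A1), (A2) and (SC) hold. Then for every $x\in\mathcal{X}$ and $t>0$, $$\|y_t^*(x)-y^*(x)\|\le\sqrt{\frac{2}{\mu_g}kt}.$$
   Context: Let $f,g,h_1,\dots,h_k:\mathbb{R}^n\times\mathbb{R}^m\to\mathbb{R}$ and $\mathcal{X}\subseteq\mathbb{R}^n$. For $x\in\mathcal{X}$ let $\mathcal{Y}(x)=\{y: h_i(x,y)\le 0,\ i=1,\dots,k\}$ and $y^*(x)=\arg\min_{y\in\mathcal{Y}(x)} g(x,y)$. For $t>0$ let $\widetilde g_t(x,y)=g(x,y)-t\sum_{i=1}^k\log(-h_i(x,y))$ (defined when all $h_i(x,y)<0$) and $y_t^*(x)=\arg\min_y\widetilde g_t(x,y)$. Assumptions: (A1) $f$ once and $g,h_i$ twice continuously differentiable; (A2) $\mathcal{X}$ convex and compact and for every $x\in\mathcal{X}$ there is $y$ with $h_i(x,y)<0$ for all $i$; (SC) for every $x\in\mathcal{X}$, $g(x,\cdot)$ is $\mu_g$-strongly convex and each $h_i(x,\cdot)$ is convex. *)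

theory Defs
  imports "HOL-Analysis.Analysis"
begin

definition C1_fun :: "('a::euclidean_space \<Rightarrow> 'b::real_normed_vector) \<Rightarrow> bool" where
  "C1_fun f \<longleftrightarrow> (\<exists>D :: 'a \<Rightarrow> ('a \<Rightarrow>\<^sub>L 'b).
      (\<forall>z. (f has_derivative blinfun_apply (D z)) (at z)) \<and> continuous_on UNIV D)"

definition C2_fun :: "('a::euclidean_space \<Rightarrow> 'b::real_normed_vector) \<Rightarrow> bool" where
  "C2_fun f \<longleftrightarrow> (\<exists>D :: 'a \<Rightarrow> ('a \<Rightarrow>\<^sub>L 'b).
      (\<forall>z. (f has_derivative blinfun_apply (D z)) (at z)) \<and> C1_fun D)"

definition strongly_convex :: "real \<Rightarrow> ('a::real_normed_vector \<Rightarrow> real) \<Rightarrow> bool" where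
  "strongly_convex mu f \<longleftrightarrow> mu > 0 \<and>
     (\<forall>y z a. 0 \<le> a \<and> a \<le> 1 \<longrightarrow>
        f (a *\<^sub>R y + (1 - a) *\<^sub>R z)
          \<le> a * f y + (1 - a) * f z - mu / 2 * a * (1 - a) * (norm (y - z))\<^sup>2)"

definition barrier ::
  "('x \<times> 'y \<Rightarrow> real) \<Rightarrow> (nat \<Rightarrow> 'x \<times> 'y \<Rightarrow> real) \<Rightarrow> nat \<Rightarrow> real \<Rightarrow> 'x \<Rightarrow> 'y \<Rightarrow> real" where
  "barrier g h k t x y = g (x, y) - t * (\<Sum>i<k. ln (- h i (x, y)))"

end

theory Submission
  imports Defs
begin

theorem lemma6:
  fixes f g :: "(real^'a) \<times> (real^'b) \<Rightarrow> real"
    and h :: "nat \<Rightarrow> (real^'a) \<times> (real^'b) \<Rightarrow> real"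
    and k :: nat
    and X :: "(real^'a) set"
    and mu_g t :: real
    and x :: "real^'a"
    and ystar yt :: "real^'b"
  assumes A1_f: "C1_fun f"
    and A1_g: "C2_fun g"
    and A1_h: "\<And>i. i < k \<Longrightarrow> C2_fun (h i)"
    and A2_convex: "convex X"
    and A2_compact: "compact X"
    and A2_slater: "\<And>x'. x' \<in> X \<Longrightarrow> \<exists>y. \<forall>i<k. h i (x', y) < 0"
    and SC_g: "\<And>x'. x' \<in> X \<Longrightarrow> strongly_convex mu_g (\<lambda>y. g (x', y))"
    and SC_h: "\<And>x' i. x' \<in> X \<Longrightarrow> i < k \<Longrightarrow> convex_on UNIV (\<lambda>y. h i (x', y))"
    and x_in: "x \<in> X"
    and t_pos: "t > 0"
    and ystar_feas: "\<forall>i<k. h i (x, ystar) \<le> 0"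
    and ystar_min: "\<And>y. (\<forall>i<k. h i (x, y) \<le> 0) \<Longrightarrow> g (x, ystar) \<le> g (x, y)"
    and yt_feas: "\<forall>i<k. h i (x, yt) < 0"
    and yt_min: "\<And>y. (\<forall>i<k. h i (x, y) < 0) \<Longrightarrow> barrier g h k t x yt \<le> barrier g h k t x y"
  shows "norm (yt - ystar) \<le> sqrt (2 / mu_g * real k * t)"
proof -
  define G where "G = (\<lambda>y. g (x, y))"
  define d where "d = norm (yt - ystar)"
  have SCG: "strongly_convex mu_g G" using SC_g[OF x_in] unfolding G_def .
  hence mu_pos: "mu_g > 0" unfolding strongly_convex_def by simp
  have SCGD: "G (a *\<^sub>R y + (1 - a) *\<^sub>R z) \<le> a * G y + (1 - a) * G z - mu_g / 2 * a * (1 - a) * (norm (y - z))\<^sup>2"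
    if "0 \<le> a" "a \<le> 1" for a y z using SCG that unfolding strongly_convex_def by blast
  have HC: "h i (x, (1 - s) *\<^sub>R y + s *\<^sub>R z) \<le> (1 - s) * h i (x, y) + s * h i (x, z)"
    if "i < k" "0 \<le> s" "s \<le> 1" for i s y z
    using convex_onD[OF SC_h[OF x_in that(1)], of s y z] that by simp
  have step1: "mu_g / 2 * (1 - a) * d\<^sup>2 \<le> G yt - G ystar" if a: "0 < a" "a < 1" for a
  proof -
    define z where "z = a *\<^sub>R yt + (1 - a) *\<^sub>R ystar"
    have "\<forall>i<k. h i (x, z) \<le> 0"
    proof (intro allI impI)
      fix i assume i: "i < k"
      have "h i (x, z) \<le> (1 - (1 - a)) * h i (x, yt) + (1 - a) * h i (x, ystar)"
        using HC[OF i, of "1 - a" yt ystar] a unfolding z_def by simp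
      moreover have "h i (x, yt) \<le> 0" "h i (x, ystar) \<le> 0" using yt_feas ystar_feas i by auto
      ultimately show "h i (x, z) \<le> 0" using a
        by (smt (verit) mult_nonneg_nonpos)
    qed
    hence "G ystar \<le> G z" using ystar_min unfolding G_def by blast
    moreover have "G z \<le> a * G yt + (1 - a) * G ystar - mu_g / 2 * a * (1 - a) * d\<^sup>2"
      using SCGD[of a yt ystar] a unfolding z_def d_def by simp
    ultimately have "a * (mu_g / 2 * (1 - a) * d\<^sup>2) \<le> a * (G yt - G ystar)"
      by (simp add: algebra_simps)
    thus ?thesis using a by simp
  qed
  have step2: "G yt - G ystar \<le> t * real k / (1 - s)" if s: "0 < s" "s < 1" for s
  proof -
    define z where "z = (1 - s) *\<^sub>R yt + s *\<^sub>R ystar"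
    have hz: "(1 - s) * (- h i (x, yt)) \<le> - h i (x, z)" if i: "i < k" for i
    proof -
      have "h i (x, z) \<le> (1 - s) * h i (x, yt) + s * h i (x, ystar)"
        using HC[OF i, of s yt ystar] s unfolding z_def by simp
      moreover have "s * h i (x, ystar) \<le> 0" using ystar_feas i s by (simp add: mult_nonneg_nonpos)
      ultimately show ?thesis by simp
    qed
    have pos: "0 < (1 - s) * (- h i (x, yt))" if "i < k" for i
      using yt_feas that s by (simp add: mult_pos_neg)
    have zfeas: "\<forall>i<k. h i (x, z) < 0"
      using hz pos by (smt (verit))
    have lnz: "ln (1 - s) + ln (- h i (x, yt)) \<le> ln (- h i (x, z))" if i: "i < k" for i
    proof -
      have "ln ((1 - s) * (- h i (x, yt))) \<le> ln (- h i (x, z))"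
        using hz[OF i] pos[OF i] by simp
      moreover have "ln ((1 - s) * (- h i (x, yt))) = ln (1 - s) + ln (- h i (x, yt))"
        using s yt_feas i by (intro ln_mult_pos) auto
      ultimately show ?thesis by simp
    qed
    have "(\<Sum>i<k. ln (1 - s) + ln (- h i (x, yt))) \<le> (\<Sum>i<k. ln (- h i (x, z)))"
      by (rule sum_mono) (use lnz in auto)
    hence sumz: "real k * ln (1 - s) + (\<Sum>i<k. ln (- h i (x, yt))) \<le> (\<Sum>i<k. ln (- h i (x, z)))"
      by (simp add: sum.distrib)
    have "barrier g h k t x yt \<le> barrier g h k t x z" using yt_min zfeas by blast
    hence b: "G yt - t * (\<Sum>i<k. ln (- h i (x, yt))) \<le> G z - t * (\<Sum>i<k. ln (- h i (x, z)))"
      unfolding barrier_def G_def by simp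
    have "t * (real k * ln (1 - s) + (\<Sum>i<k. ln (- h i (x, yt)))) \<le> t * (\<Sum>i<k. ln (- h i (x, z)))"
      using sumz t_pos by (simp add: mult_left_mono)
    with b have c: "G yt \<le> G z - t * real k * ln (1 - s)" by (simp add: algebra_simps)
    have "G z \<le> (1 - s) * G yt + (1 - (1 - s)) * G ystar - mu_g / 2 * (1 - s) * (1 - (1 - s)) * (norm (yt - ystar))\<^sup>2"
      using SCGD[of "1 - s" yt ystar] s unfolding z_def by simp
    moreover have "0 \<le> mu_g / 2 * (1 - s) * (1 - (1 - s)) * (norm (yt - ystar))\<^sup>2"
      using mu_pos s by simp
    ultimately have gz: "G z \<le> (1 - s) * G yt + s * G ystar" by simp
    have "ln (1 / (1 - s)) \<le> 1 / (1 - s) - 1" using s by (intro ln_le_minus_one) simp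
    moreover have "ln (1 / (1 - s)) = - ln (1 - s)" using s by (simp add: ln_div)
    moreover have "1 / (1 - s) - 1 = s / (1 - s)" using s by (simp add: field_simps)
    ultimately have lnb: "- ln (1 - s) \<le> s / (1 - s)" by simp
    have tk: "0 \<le> t * real k" using t_pos by simp
    have "s * (G yt - G ystar) \<le> t * real k * (- ln (1 - s))"
      using c gz by (simp add: algebra_simps)
    also have "\<dots> \<le> t * real k * (s / (1 - s))" using lnb tk by (rule mult_left_mono)
    also have "\<dots> = s * (t * real k / (1 - s))" by simp
    finally have "s * (G yt - G ystar) \<le> s * (t * real k / (1 - s))" .
    thus ?thesis by (rule mult_left_le_imp_le) (use s in simp)
  qed
  define c where "c = mu_g / 2 * d\<^sup>2"
  have c0: "0 \<le> c" using mu_pos unfolding c_def by simp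
  have key: "(1 - 2 * s) * c \<le> t * real k" if s: "0 < s" "s < 1" for s
  proof -
    have "mu_g / 2 * (1 - s) * d\<^sup>2 \<le> t * real k / (1 - s)" by (rule order_trans[OF step1[OF s] step2[OF s]])
    hence "(1 - s) * ((1 - s) * c) \<le> t * real k" using s unfolding c_def
      by (simp add: field_simps)
    moreover have "(1 - 2 * s) * c \<le> (1 - s) * ((1 - s) * c)"
    proof -
      have "(1 - 2 * s) \<le> (1 - s) * (1 - s)" by (simp add: algebra_simps)
      thus ?thesis using c0 by (simp add: mult_right_mono mult.assoc[symmetric])
    qed
    ultimately show ?thesis by simp
  qed
  have ck: "c \<le> t * real k"
  proof (rule ccontr)
    assume "\<not> c \<le> t * real k"
    hence lt: "t * real k < c" by simp
    hence cpos: "0 < c" using t_pos by (smt (verit) of_nat_0_le_iff mult_nonneg_nonneg)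
    define s where "s = min (1/2) ((c - t * real k) / (4 * c))"
    have s0: "0 < s" "s < 1" using lt cpos unfolding s_def by auto
    have "s \<le> (c - t * real k) / (4 * c)" unfolding s_def by simp
    hence "s * (4 * c) \<le> c - t * real k" using cpos by (simp add: pos_le_divide_eq)
    hence "2 * s * c \<le> (c - t * real k) / 2" by simp
    with key[OF s0] lt show False by (simp add: algebra_simps)
  qed
  hence "d\<^sup>2 \<le> 2 / mu_g * real k * t" using mu_pos unfolding c_def by (simp add: field_simps)
  thus ?thesis unfolding d_def by (rule real_le_rsqrt)
qed

end
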